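(* Let $T$ and $Q$ be selfadjoint bounded operators on a Hilbert space $V$, and assume $Q$ is nonnegative. Then the operator $A:=Q(I+iT)^{-1}\in\mathcal{L}(V)$ is sectorial of some angle $\theta<\frac{\pi}{2}$.
   Context: A closed linear operator $A$ on a Banach space is sectorial of angle $\theta\in(0,\pi)$ if $\sigma(A)\subseteq\Sigma_\theta:=\{z\in\mathbb{C}:|\arg z|\le\theta\}$ and for every $\theta'\in(\theta,\pi)$ one has $\sup_{z\notin\Sigma_{\theta'}}\|zR(z,A)\|<\infty$, where $R(z,A)=(z-A)^{-1}$. *)

theory Defs
  imports "HOL-Analysis.Analysis"
begin

text \<open>A complex Hilbert space
is modelled as a real Hilbert space with a compatible complex scalar multiplication
and a complex inner product (antilinear in the first argument) whose real part is the
real inner product.\<close>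

class complex_vector = real_vector +
  fixes scaleC :: "complex \<Rightarrow> 'a \<Rightarrow> 'a"
  assumes scaleC_add_right: "scaleC a (x + y) = scaleC a x + scaleC a y"
    and scaleC_add_left: "scaleC (a + b) x = scaleC a x + scaleC b x"
    and scaleC_scaleC: "scaleC a (scaleC b x) = scaleC (a * b) x"
    and scaleC_one: "scaleC 1 x = x"
    and scaleR_scaleC: "scaleR r x = scaleC (complex_of_real r) x"

class complex_inner = real_inner + complex_vector +
  fixes cinner :: "'a \<Rightarrow> 'a \<Rightarrow> complex"
  assumes cinner_commute: "cinner x y = cnj (cinner y x)"
    and cinner_add_left: "cinner (x + y) z = cinner x z + cinner y z"
    and cinner_scaleC_left: "cinner (scaleC c x) y = cnj c * cinner x y"
    and inner_cinner: "inner x y = Re (cinner x y)"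

class chilbert_space = complex_inner + complete_space

definition cbounded :: "('v::complex_inner \<Rightarrow> 'v) \<Rightarrow> bool" where
  "cbounded T \<longleftrightarrow> bounded_linear T \<and> (\<forall>c x. T (scaleC c x) = scaleC c (T x))"

definition selfadjoint :: "('v::complex_inner \<Rightarrow> 'v) \<Rightarrow> bool" where
  "selfadjoint T \<longleftrightarrow> (\<forall>x y. cinner (T x) y = cinner x (T y))"

definition nonnegative_op :: "('v::complex_inner \<Rightarrow> 'v) \<Rightarrow> bool" where
  "nonnegative_op Q \<longleftrightarrow> (\<forall>x. Im (cinner (Q x) x) = 0 \<and> Re (cinner (Q x) x) \<ge> 0)"

definition is_resolvent :: "('v::complex_inner \<Rightarrow> 'v) \<Rightarrow> complex \<Rightarrow> ('v \<Rightarrow> 'v) \<Rightarrow> bool" where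
  "is_resolvent A z R \<longleftrightarrow> cbounded R \<and> (\<forall>x. R (scaleC z x - A x) = x)
      \<and> (\<forall>x. scaleC z (R x) - A (R x) = x)"

definition op_spectrum :: "('v::complex_inner \<Rightarrow> 'v) \<Rightarrow> complex set" where
  "op_spectrum A = {z. \<not> (\<exists>R. is_resolvent A z R)}"

definition resolvent :: "('v::complex_inner \<Rightarrow> 'v) \<Rightarrow> complex \<Rightarrow> ('v \<Rightarrow> 'v)" where
  "resolvent A z = (SOME R. is_resolvent A z R)"

definition sector :: "real \<Rightarrow> complex set" where
  "sector \<theta> = {z. z = 0 \<or> \<bar>Arg z\<bar> \<le> \<theta>}"

definition sectorial :: "('v::complex_inner \<Rightarrow> 'v) \<Rightarrow> real \<Rightarrow> bool" where
  "sectorial A \<theta> \<longleftrightarrow> 0 < \<theta> \<and> \<theta> < pi \<and> op_spectrum A \<subseteq> sector \<theta> \<and>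
     (\<forall>\<theta>'. \<theta> < \<theta>' \<and> \<theta>' < pi \<longrightarrow>
        (\<exists>M. \<forall>z. z \<notin> sector \<theta>' \<longrightarrow> onorm (\<lambda>x. scaleC z (resolvent A z x)) \<le> M))"

end

theory Submission imports Defs begin

lemma scaleC_zero_right[simp]: "scaleC c (0::'a::complex_vector) = 0"
  using scaleC_add_right[of c "0::'a" 0] by simp
lemma scaleC_zero_left[simp]: "scaleC 0 (x::'a::complex_vector) = 0"
  using scaleC_add_left[of 0 0 x] by simp
lemma scaleC_minus_right: "scaleC c (- (x::'a::complex_vector)) = - scaleC c x"
  using scaleC_add_right[of c x "-x"] by (intro add.inverse_unique[symmetric]) simp
lemma scaleC_diff_right: "scaleC c ((x::'a::complex_vector) - y) = scaleC c x - scaleC c y"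
  using scaleC_add_right[of c x "-y"] scaleC_minus_right[of c y] by simp
lemma cinner_scaleC_right: "cinner x (scaleC c (y::'a::complex_inner)) = c * cinner x y"
  by (metis cinner_commute cinner_scaleC_left complex_cnj_cnj complex_cnj_mult)
lemma cinner_add_right: "cinner x (y + (z::'a::complex_inner)) = cinner x y + cinner x z"
  by (metis cinner_commute cinner_add_left complex_cnj_add)
lemma cinner_zero_right[simp]: "cinner x (0::'a::complex_inner) = 0"
  using cinner_add_right[of x "0::'a" 0] by simp
lemma cinner_minus_right: "cinner x (- (y::'a::complex_inner)) = - cinner x y"
  using cinner_add_right[of x y "-y"] by (intro add.inverse_unique[symmetric]) simp
lemma cinner_diff_right: "cinner x ((y::'a::complex_inner) - z) = cinner x y - cinner x z"
  using cinner_add_right[of x y "-z"] cinner_minus_right[of x z] by simp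
lemma cinner_self: "cinner x (x::'a::complex_inner) = complex_of_real ((norm x)^2)"
proof (rule complex_eqI)
  have "cinner x x = cnj (cinner x x)" by (rule cinner_commute)
  then show "Im (cinner x x) = Im (complex_of_real ((norm x)^2))"
    by (metis complex_cnj_cancel_iff complex_cnj_zero_iff complex_is_Real_iff Im_complex_of_real
        Reals_cnj_iff)
  show "Re (cinner x x) = Re (complex_of_real ((norm x)^2))"
    by (simp add: power2_norm_eq_inner inner_cinner)
qed
lemma norm_scaleC: "norm (scaleC c (x::'a::complex_inner)) = cmod c * norm x"
proof -
  have "(norm (scaleC c x))^2 = Re (cinner (scaleC c x) (scaleC c x))"
    by (simp add: power2_norm_eq_inner inner_cinner)
  also have "\<dots> = Re (cnj c * c * cinner x x)"
    by (simp only: cinner_scaleC_left cinner_scaleC_right) (simp add: ac_simps)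
  also have "\<dots> = Re (cnj c * c * complex_of_real ((norm x)^2))"
    by (simp only: cinner_self)
  also have "\<dots> = (cmod c * norm x)^2"
    by (simp add: complex_norm_square[symmetric] mult.commute power_mult_distrib)
  finally show ?thesis
    by (simp add: power2_eq_imp_eq)
qed
lemma inner_scaleC_right: "inner x (scaleC u (y::'a::complex_inner)) = Re (u * cinner x y)"
  by (simp add: inner_cinner cinner_scaleC_right)
lemma scaleC_scaleR_comm: "scaleC c (scaleR r (x::'a::complex_vector)) = scaleR r (scaleC c x)"
  by (simp add: scaleR_scaleC scaleC_scaleC mult.commute)
lemma bounded_linear_scaleC: "bounded_linear (scaleC c :: 'a::complex_inner \<Rightarrow> 'a)"
  by (rule bounded_linear_intro[of _ "cmod c"])
     (simp_all add: scaleC_add_right scaleC_scaleR_comm norm_scaleC mult.commute)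

lemma cbounded_add: "cbounded f \<Longrightarrow> cbounded g \<Longrightarrow> cbounded (\<lambda>x. f x + g x)"
  unfolding cbounded_def by (auto intro: bounded_linear_add simp: scaleC_add_right)
lemma cbounded_diff: "cbounded f \<Longrightarrow> cbounded g \<Longrightarrow> cbounded (\<lambda>x. f x - g x)"
  unfolding cbounded_def by (auto intro: bounded_linear_sub simp: scaleC_diff_right)
lemma cbounded_scaleC: "cbounded f \<Longrightarrow> cbounded (\<lambda>x. scaleC c (f x))"
  unfolding cbounded_def
  by (auto intro: bounded_linear_compose[OF bounded_linear_scaleC] simp: scaleC_scaleC mult.commute)
lemma cbounded_comp: "cbounded f \<Longrightarrow> cbounded g \<Longrightarrow> cbounded (\<lambda>x. f (g x))"
  unfolding cbounded_def by (auto intro: bounded_linear_compose)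
lemma cbounded_id: "cbounded (\<lambda>x. x)"
  unfolding cbounded_def by (auto intro: bounded_linear_ident)

lemma coercive_surj:
  fixes B :: "'a::{real_inner,complete_space} \<Rightarrow> 'a"
  assumes bl: "bounded_linear B" and c: "c > 0" and coer: "\<And>x. c * (norm x)^2 \<le> inner x (B x)"
  shows "\<exists>x. B x = f"
proof -
  interpret B: bounded_linear B by fact
  obtain M0 where M0: "\<And>x. norm (B x) \<le> norm x * M0" "M0 > 0" using B.pos_bounded by blast
  define M where "M = max M0 c"
  have Mb: "norm (B x) \<le> norm x * M" for x
  proof -
    have "norm x * M0 \<le> norm x * M" by (simp add: M_def mult_left_mono)
    then show ?thesis using M0(1)[of x] by linarith
  qed
  have Mpos: "M > 0" and cM: "c \<le> M" using c by (auto simp: M_def)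
  define e where "e = c / M^2"
  define k where "k = sqrt (1 - c^2/M^2)"
  have e0: "e \<ge> 0" using c Mpos by (simp add: e_def)
  have k2: "1 - c^2/M^2 \<ge> 0" using cM c Mpos
    by (simp add: field_simps power_mono)
  have k: "0 \<le> k" "k < 1" using k2 c Mpos by (auto simp: k_def)
  have kk: "k^2 = 1 - c^2/M^2" using k2 by (simp add: k_def)
  define F where "F x = x - e *\<^sub>R (B x - f)" for x
  have "dist (F x) (F y) \<le> k * dist x y" for x y
  proof -
    define d where "d = x - y"
    have Fd: "F x - F y = d - e *\<^sub>R B d" by (simp add: F_def d_def B.diff algebra_simps)
    have "(norm (d - e *\<^sub>R B d))^2 = (norm d)^2 - 2*e*inner d (B d) + e^2 * (norm (B d))^2"
      by (simp only: power2_norm_eq_inner inner_diff_left inner_diff_right inner_scaleR_left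
          inner_scaleR_right inner_commute[of "B d" d]) (simp add: power2_eq_square algebra_simps)
    also have "\<dots> \<le> (norm d)^2 - 2*e*(c * (norm d)^2) + e^2 * (norm d * M)^2"
    proof -
      have "e * (c * (norm d)^2) \<le> e * inner d (B d)" using coer[of d] e0 by (rule mult_left_mono)
      moreover have "(norm (B d))^2 \<le> (norm d * M)^2" using Mb[of d] by (simp add: power_mono)
      hence "e^2 * (norm (B d))^2 \<le> e^2 * (norm d * M)^2" by (simp add: mult_left_mono)
      ultimately show ?thesis by linarith
    qed
    also have "\<dots> = k^2 * (norm d)^2" using Mpos unfolding kk e_def
      by (simp add: field_simps power2_eq_square)
    finally have "(norm (F x - F y))^2 \<le> (k * norm d)^2" by (simp add: Fd power_mult_distrib)
    then have "norm (F x - F y) \<le> k * norm d" by (rule power2_le_imp_le) (simp add: k(1))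
    then show ?thesis by (simp add: dist_norm d_def)
  qed
  then obtain x where "F x = x" using banach_fix_type[OF k] by blast
  then have "e *\<^sub>R (B x - f) = 0" by (simp add: F_def)
  moreover have "e > 0" using c Mpos by (simp add: e_def)
  ultimately show ?thesis by auto
qed

lemma coercive_inverse:
  fixes B :: "'v::chilbert_space \<Rightarrow> 'v"
  assumes cb: "cbounded B" and u: "cmod u = 1" and c: "c > 0"
    and coer: "\<And>x. c * (norm x)^2 \<le> inner x (scaleC u (B x))"
  shows "\<exists>R. cbounded R \<and> (\<forall>x. R (B x) = x) \<and> (\<forall>y. B (R y) = y) \<and> (\<forall>y. c * norm (R y) \<le> norm y)"
proof -
  have bl: "bounded_linear B" and hom: "\<And>a x. B (scaleC a x) = scaleC a (B x)"
    using cb by (auto simp: cbounded_def)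
  interpret B: bounded_linear B by fact
  have lb: "c * norm x \<le> norm (B x)" for x
  proof -
    have "c * (norm x)^2 \<le> norm x * norm (scaleC u (B x))"
      using coer[of x] norm_cauchy_schwarz[of x "scaleC u (B x)"] by linarith
    hence *: "(c * norm x) * norm x \<le> norm (B x) * norm x"
      by (simp add: norm_scaleC u power2_eq_square mult.commute mult.left_commute)
    show ?thesis
    proof (cases "norm x = 0")
      case True then show ?thesis by simp
    next
      case False then have "norm x > 0" by simp
      with * show ?thesis by (simp add: mult_le_cancel_right)
    qed
  qed
  have u0: "u \<noteq> 0" using u by auto
  have surj: "\<exists>x. B x = y" for y
  proof -
    have "bounded_linear (\<lambda>x. scaleC u (B x))"
      using bounded_linear_compose[OF bounded_linear_scaleC bl] by (simp add: o_def)
    then obtain x where "scaleC u (B x) = scaleC u y"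
      using coercive_surj[of "\<lambda>x. scaleC u (B x)" c] c coer by blast
    then have "scaleC (inverse u) (scaleC u (B x)) = scaleC (inverse u) (scaleC u y)" by simp
    then have "B x = y" using u0 by (simp add: scaleC_scaleC scaleC_one)
    then show ?thesis by blast
  qed
  have inj: "x = y" if "B x = B y" for x y
  proof -
    have "B (x - y) = 0" using that by (simp add: B.diff)
    then have "c * norm (x - y) \<le> 0" using lb[of "x - y"] by simp
    then show ?thesis using c by (simp add: mult_le_0_iff)
  qed
  define R where "R y = (SOME x. B x = y)" for y
  have BR: "B (R y) = y" for y unfolding R_def using surj[of y] by (rule someI_ex)
  have RB: "R (B x) = x" for x using inj BR by blast
  have Rb: "c * norm (R y) \<le> norm y" for y using lb[of "R y"] BR[of y] by simp
  have "bounded_linear R"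
  proof (rule bounded_linear_intro[of R "1/c"])
    show "R (x + y) = R x + R y" for x y
      by (rule inj) (simp add: BR B.add)
    show "R (scaleR r x) = scaleR r (R x)" for r x
      by (rule inj) (simp add: BR B.scale)
    show "norm (R x) \<le> norm x * (1/c)" for x
      using Rb[of x] c by (simp add: field_simps mult.commute)
  qed
  moreover have "R (scaleC a x) = scaleC a (R x)" for a x
    by (rule inj) (simp add: BR hom)
  ultimately have "cbounded R" by (simp add: cbounded_def)
  then show ?thesis using RB BR Rb by blast
qed
lemma sector_rot:
  fixes z :: complex and K th :: real
  assumes K: "K \<ge> 0" and th: "0 < th" "th < pi" and pos: "sin th - K * cos th > 0"
    and z: "z \<noteq> 0" "Re z < cos th * cmod z"
  shows "\<exists>u. cmod u = 1 \<and> Re u \<le> 0 \<and> (\<forall>n t. n \<ge> 0 \<longrightarrow> \<bar>t\<bar> \<le> K*n \<longrightarrow>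
          min 1 (sin th - K * cos th) * cmod z * n \<le> Re (u * z * Complex n t))"
proof (cases "Re z \<le> 0")
  case True
  define u where "u = cnj z / complex_of_real (cmod z)"
  have uz: "u * z = complex_of_real (cmod z)" using z(1)
    by (simp add: u_def complex_norm_square[symmetric] power2_eq_square field_simps)
  have "cmod u = 1" using z(1) by (simp add: u_def norm_divide)
  moreover have "Re u \<le> 0" using True by (simp add: u_def divide_nonpos_nonneg)
  moreover have "min 1 (sin th - K * cos th) * cmod z * n \<le> Re (u * z * Complex n t)" if "n \<ge> 0" for n t
  proof -
    have "min 1 (sin th - K * cos th) * (cmod z * n) \<le> 1 * (cmod z * n)"
      using that by (intro mult_right_mono) auto
    then show ?thesis by (simp add: uz)
  qed
  ultimately show ?thesis by blast
next
  case False
  then have rz: "Re z > 0" by simp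
  have cpos: "cos th > 0" using rz z(2) by (smt (verit) norm_ge_zero mult_nonpos_nonneg)
  have spos: "sin th > 0" using th by (simp add: sin_gt_zero)
  have "(Im z)^2 = (cmod z)^2 - (Re z)^2" by (simp add: cmod_power2)
  also have "\<dots> > (cmod z)^2 - (cos th * cmod z)^2"
    using rz z(2) by (simp add: power_strict_mono)
  also have "(cmod z)^2 - (cos th * cmod z)^2 = (sin th * cmod z)^2"
    by (simp add: power_mult_distrib sin_squared_eq algebra_simps)
  finally have "(sin th * cmod z)^2 < (\<bar>Im z\<bar>)^2" by simp
  then have imb: "sin th * cmod z < \<bar>Im z\<bar>" by (rule power2_less_imp_less) simp
  define u where "u = (if Im z \<ge> 0 then - \<i> else \<i>)"
  have "cmod u = 1" by (simp add: u_def)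
  moreover have "Re u \<le> 0" by (simp add: u_def)
  moreover have "min 1 (sin th - K * cos th) * cmod z * n \<le> Re (u * z * Complex n t)"
    if n: "n \<ge> 0" and t: "\<bar>t\<bar> \<le> K*n" for n t
  proof -
    have re: "Re (u * z * Complex n t) = \<bar>Im z\<bar> * n + (if Im z \<ge> 0 then Re z * t else - (Re z * t))"
      by (simp add: u_def)
    have a: "\<bar>Re z * t\<bar> \<le> Re z * (K*n)" using rz t by (simp add: abs_mult mult_left_mono)
    have b: "Re z * (K*n) \<le> cos th * cmod z * (K*n)" using z(2) K n by (simp add: mult_right_mono)
    have c: "sin th * cmod z * n \<le> \<bar>Im z\<bar> * n" using imb n by (simp add: mult_right_mono)
    have d: "Re (u * z * Complex n t) \<ge> \<bar>Im z\<bar> * n - \<bar>Re z * t\<bar>" unfolding re by auto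
    have e: "min 1 (sin th - K * cos th) * (cmod z * n) \<le> (sin th - K * cos th) * (cmod z * n)"
      using n by (intro mult_right_mono) auto
    have f: "(sin th - K * cos th) * (cmod z * n) = sin th * cmod z * n - cos th * cmod z * (K*n)"
      by (simp add: algebra_simps)
    show ?thesis using a b c d e f by (simp add: mult.assoc)
  qed
  ultimately show ?thesis by blast
qed

lemma not_sector_Re:
  assumes "z \<notin> sector th" "0 \<le> th"
  shows "z \<noteq> 0" "Re z < cos th * cmod z"
proof -
  show z0: "z \<noteq> 0" using assms by (auto simp: sector_def)
  have "\<bar>Arg z\<bar> > th" using assms by (auto simp: sector_def)
  moreover have "\<bar>Arg z\<bar> \<le> pi" using Arg_bounded[of z] by auto
  ultimately have "cos \<bar>Arg z\<bar> < cos th" using assms(2) by (intro cos_monotone_0_pi) auto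
  then have "Re z / cmod z < cos th" using cos_Arg[OF z0] by simp
  then show "Re z < cos th * cmod z" using z0 by (simp add: divide_less_eq)
qed

lemma sin_minus_K_cos_pos:
  fixes K th :: real
  assumes K: "K \<ge> 0" and th: "arctan K < th" "th < pi"
  shows "sin th - K * cos th > 0"
proof (cases "th < pi/2")
  case True
  have th0: "0 < th" using th K by (smt (verit) zero_le_arctan_iff)
  have "arctan K < arctan (tan th)" using th True th0 by (simp add: arctan_tan)
  then have "K < tan th" by (simp add: arctan_less_iff)
  moreover have "cos th > 0" using True th0 by (intro cos_gt_zero_pi) auto
  ultimately have "K * cos th < tan th * cos th" by simp
  also have "\<dots> = sin th" using \<open>cos th > 0\<close> by (simp add: tan_def)
  finally show ?thesis by simp
next
  case False
  have "cos th \<le> 0" using cos_monotone_0_pi_le[of "pi/2" th] False th by simp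
  moreover have "sin th > 0" using th K by (intro sin_gt_zero) (auto simp: not_less, smt (verit) zero_le_arctan_iff)
  moreover have "K * cos th \<le> 0" using K \<open>cos th \<le> 0\<close> by (simp add: mult_nonneg_nonpos)
  ultimately show ?thesis by simp
qed

theorem lemma2p3:
  fixes T Q :: "'v::chilbert_space \<Rightarrow> 'v"
  assumes "cbounded T" and "selfadjoint T"
    and "cbounded Q" and "selfadjoint Q" and "nonnegative_op Q"
  shows "\<exists>S. cbounded S \<and> (\<forall>x. S (x + scaleC \<i> (T x)) = x) \<and> (\<forall>x. S x + scaleC \<i> (T (S x)) = x)
           \<and> (\<exists>\<theta>. \<theta> < pi / 2 \<and> sectorial (Q \<circ> S) \<theta>)"
proof -
  have Tb: "bounded_linear T" using assms(1) by (simp add: cbounded_def)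
  have realT: "cinner x (T x) = complex_of_real (Re (cinner x (T x)))" for x
  proof -
    have "cinner x (T x) = cnj (cinner (T x) x)" by (rule cinner_commute)
    also have "cinner (T x) x = cinner x (T x)" using assms(2) by (simp add: selfadjoint_def)
    finally have "Im (cinner x (T x)) = Im (cnj (cinner x (T x)))" by simp
    then have "Im (cinner x (T x)) = 0" by simp
    then show ?thesis by (simp add: complex_eq_iff)
  qed
  have realQ: "cinner x (Q x) = complex_of_real (Re (cinner x (Q x))) \<and> Re (cinner x (Q x)) \<ge> 0" for x
  proof -
    have e: "cinner x (Q x) = cnj (cinner (Q x) x)" by (rule cinner_commute)
    have "Im (cinner (Q x) x) = 0" "Re (cinner (Q x) x) \<ge> 0" using assms(5) by (auto simp: nonnegative_op_def)
    then show ?thesis unfolding e by (simp add: complex_eq_iff)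
  qed
  define B0 where "B0 = (\<lambda>x. x + scaleC \<i> (T x))"
  have cbB0: "cbounded B0" unfolding B0_def by (intro cbounded_add cbounded_id cbounded_scaleC assms(1))
  have "\<exists>S. cbounded S \<and> (\<forall>x. S (B0 x) = x) \<and> (\<forall>y. B0 (S y) = y) \<and> (\<forall>y. 1 * norm (S y) \<le> norm y)"
  proof (rule coercive_inverse[OF cbB0, of 1])
    show "cmod 1 = 1" by simp
    show "(0::real) < 1" by simp
    fix x
    have "inner x (scaleC 1 (B0 x)) = Re (cinner x x + \<i> * cinner x (T x))"
      by (simp add: scaleC_one B0_def inner_cinner cinner_add_right cinner_scaleC_right)
    also have "\<dots> = (norm x)^2" by (subst realT) (simp add: cinner_self)
    finally show "1 * (norm x)^2 \<le> inner x (scaleC 1 (B0 x))" by simp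
  qed
  then obtain S where S: "cbounded S" "\<And>x. S (B0 x) = x" "\<And>y. B0 (S y) = y" by auto
  define K where "K = onorm T"
  have K0: "K \<ge> 0" using onorm_pos_le[OF Tb] by (simp add: K_def)
  have TK: "norm (T x) \<le> K * norm x" for x using onorm[OF Tb] by (simp add: K_def)
  have tK: "\<bar>Re (cinner x (T x))\<bar> \<le> K * (norm x)^2" for x
  proof -
    have "\<bar>Re (cinner x (T x))\<bar> \<le> norm x * norm (T x)"
      using Cauchy_Schwarz_ineq2[of x "T x"] by (simp add: inner_cinner)
    also have "\<dots> \<le> norm x * (K * norm x)" using TK[of x] by (simp add: mult_left_mono)
    finally show ?thesis by (simp add: power2_eq_square mult_ac)
  qed
  have B0n: "norm (B0 v) \<le> (1+K) * norm v" for v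
  proof -
    have "norm (B0 v) \<le> norm v + norm (scaleC \<i> (T v))" unfolding B0_def by (rule norm_triangle_ineq)
    also have "\<dots> \<le> norm v + K * norm v" using TK[of v] by (simp add: norm_scaleC)
    finally show ?thesis by (simp add: algebra_simps)
  qed
  define \<alpha> where "\<alpha> = arctan K"
  have \<alpha>: "0 \<le> \<alpha>" "\<alpha> < pi/2" using K0 arctan_ubound by (auto simp: \<alpha>_def)
  have KEY: "\<exists>C\<ge>0. \<forall>z. z \<notin> sector th \<longrightarrow> (\<exists>R. is_resolvent (Q \<circ> S) z R) \<and>
      (\<forall>R y. is_resolvent (Q \<circ> S) z R \<longrightarrow> cmod z * norm (R y) \<le> C * norm y)"
    if th: "\<alpha> < th" "th < pi" for th
  proof -
    have th0: "0 < th" using \<alpha> th by linarith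
    define c where "c = min 1 (sin th - K * cos th)"
    have scpos: "sin th - K * cos th > 0" using sin_minus_K_cos_pos[OF K0] th \<alpha>_def by auto
    then have cpos: "c > 0" by (simp add: c_def)
    define C where "C = (1 + K) / c"
    have C0: "C \<ge> 0" using K0 cpos by (simp add: C_def)
    have "(\<exists>R. is_resolvent (Q \<circ> S) z R) \<and>
      (\<forall>R y. is_resolvent (Q \<circ> S) z R \<longrightarrow> cmod z * norm (R y) \<le> C * norm y)" if z: "z \<notin> sector th" for z
    proof -
      have z0: "z \<noteq> 0" and zre: "Re z < cos th * cmod z" using not_sector_Re[OF z] th0 by auto
      obtain u where u: "cmod u = 1" "Re u \<le> 0"
        and uc: "\<And>n t. n \<ge> 0 \<Longrightarrow> \<bar>t\<bar> \<le> K*n \<Longrightarrow> c * cmod z * n \<le> Re (u * z * Complex n t)"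
        using sector_rot[OF K0 th0 th(2) scpos z0 zre] unfolding c_def by blast
      define Bz where "Bz = (\<lambda>v. scaleC z (B0 v) - Q v)"
      have cbBz: "cbounded Bz" unfolding Bz_def by (intro cbounded_diff cbounded_scaleC cbB0 assms(3))
      have coer: "(c * cmod z) * (norm v)^2 \<le> inner v (scaleC u (Bz v))" for v
      proof -
        define n where "n = (norm v)^2"
        define t where "t = Re (cinner v (T v))"
        define q where "q = Re (cinner v (Q v))"
        have q0: "q \<ge> 0" and qe: "cinner v (Q v) = complex_of_real q" using realQ[of v] by (auto simp: q_def)
        have te: "cinner v (T v) = complex_of_real t" using realT[of v] by (simp add: t_def)
        have ce: "cinner v (Bz v) = z * Complex n t - complex_of_real q"
          by (simp add: Bz_def B0_def cinner_diff_right cinner_add_right cinner_scaleC_right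
              cinner_self te qe n_def Complex_eq)
        have "inner v (scaleC u (Bz v)) = Re (u * (z * Complex n t - complex_of_real q))"
          by (simp only: inner_scaleC_right ce)
        also have "\<dots> = Re (u * z * Complex n t) - q * Re u"
          by (auto simp: right_diff_distrib mult.assoc)
        finally have "inner v (scaleC u (Bz v)) = Re (u * z * Complex n t) - q * Re u" .
        moreover have "c * cmod z * n \<le> Re (u * z * Complex n t)"
          using uc[of n t] tK[of v] by (simp add: n_def t_def)
        moreover have "q * Re u \<le> 0" using q0 u(2) by (simp add: mult_nonneg_nonpos)
        ultimately show ?thesis by (simp add: n_def)
      qed
      have czpos: "c * cmod z > 0" using cpos z0 by simp
      obtain Rz where Rz: "cbounded Rz" "\<And>x. Rz (Bz x) = x" "\<And>y. Bz (Rz y) = y"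
          "\<And>y. (c * cmod z) * norm (Rz y) \<le> norm y"
        using coercive_inverse[OF cbBz u(1) czpos coer] by blast
      have ex: "is_resolvent (Q \<circ> S) z (\<lambda>y. B0 (Rz y))"
        unfolding is_resolvent_def
      proof (intro conjI allI)
        show "cbounded (\<lambda>y. B0 (Rz y))" by (rule cbounded_comp[OF cbB0 Rz(1)])
        fix x
        have "scaleC z x - (Q \<circ> S) x = Bz (S x)" using S(3)[of x] by (simp add: Bz_def)
        then show "B0 (Rz (scaleC z x - (Q \<circ> S) x)) = x" using Rz(2) S(3) by simp
        show "scaleC z (B0 (Rz x)) - (Q \<circ> S) (B0 (Rz x)) = x" using Rz(3)[of x] S(2) by (simp add: Bz_def)
      qed
      have bnd: "cmod z * norm (R y) \<le> C * norm y" if R: "is_resolvent (Q \<circ> S) z R" for R y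
      proof -
        define v where "v = S (R y)"
        have "y = scaleC z (R y) - Q (S (R y))" using R by (simp add: is_resolvent_def)
        also have "\<dots> = Bz v" using S(3)[of "R y"] by (simp add: Bz_def v_def)
        finally have yv: "y = Bz v" .
        have a: "c * (cmod z * norm v) \<le> norm y" using Rz(4)[of y] Rz(2)[of v] yv by (simp add: mult.assoc)
        have "norm (R y) \<le> (1+K) * norm v" using B0n[of v] S(3)[of "R y"] by (simp add: v_def)
        then have "cmod z * norm (R y) \<le> (1+K) * (cmod z * norm v)"
          by (metis mult.left_commute mult_left_mono norm_ge_zero)
        also have "\<dots> \<le> (1+K) * (norm y / c)" using a cpos K0
          by (intro mult_left_mono) (auto simp: field_simps)
        also have "\<dots> = C * norm y" by (simp add: C_def)
        finally show ?thesis .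
      qed
      show ?thesis using ex bnd by blast
    qed
    then show ?thesis using C0 by blast
  qed
  define \<theta> where "\<theta> = (\<alpha> + pi/2)/2"
  have \<theta>: "0 < \<theta>" "\<theta> < pi/2" "\<alpha> < \<theta>" using \<alpha> by (auto simp: \<theta>_def)
  have "sectorial (Q \<circ> S) \<theta>"
    unfolding sectorial_def
  proof (intro conjI allI impI)
    show "0 < \<theta>" "\<theta> < pi" using \<theta> by auto
    show "op_spectrum (Q \<circ> S) \<subseteq> sector \<theta>"
    proof
      fix z assume "z \<in> op_spectrum (Q \<circ> S)"
      then have "\<not> (\<exists>R. is_resolvent (Q \<circ> S) z R)" by (simp add: op_spectrum_def)
      then show "z \<in> sector \<theta>" using KEY[of \<theta>] \<theta> by auto
    qed
    fix \<theta>' assume "\<theta> < \<theta>' \<and> \<theta>' < pi"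
    then obtain C where C: "C \<ge> 0" and hC: "\<And>z. z \<notin> sector \<theta>' \<Longrightarrow> (\<exists>R. is_resolvent (Q \<circ> S) z R) \<and>
      (\<forall>R y. is_resolvent (Q \<circ> S) z R \<longrightarrow> cmod z * norm (R y) \<le> C * norm y)"
      using KEY[of \<theta>'] \<theta> by auto
    show "\<exists>M. \<forall>z. z \<notin> sector \<theta>' \<longrightarrow> onorm (\<lambda>x. scaleC z (resolvent (Q \<circ> S) z x)) \<le> M"
    proof (intro exI allI impI)
      fix z assume "z \<notin> sector \<theta>'"
      then have ex: "\<exists>R. is_resolvent (Q \<circ> S) z R"
        and b: "\<And>R y. is_resolvent (Q \<circ> S) z R \<Longrightarrow> cmod z * norm (R y) \<le> C * norm y"
        using hC by auto
      have "is_resolvent (Q \<circ> S) z (resolvent (Q \<circ> S) z)" unfolding resolvent_def using ex by (rule someI_ex)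
      then show "onorm (\<lambda>x. scaleC z (resolvent (Q \<circ> S) z x)) \<le> C"
        by (intro onorm_bound C) (simp add: norm_scaleC b)
    qed
  qed
  then show ?thesis using S \<theta> unfolding B0_def by blast
qed

end
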